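(* Let $p$ be a prime and $e_1\ge e_2$ positive integers with $e=e_1+e_2$ and $p\nmid(e-1)(e_1-1)(e_2-1)$. Let $pw$ be the smallest multiple of $p$ that is $\ge e_1$. Suppose $\lfloor\frac{e-1}{p}\rfloor>\lfloor\frac{e_1-1}{p}\rfloor+\lfloor\frac{e_2-1}{p}\rfloor$. Then $p\nmid\binom{e_2-1}{pw-e_1}$, $p\nmid\binom{e_2-1}{pw-e_1+1}$, and $p\nmid Z$, where $Z=\sum_{k=0}^{pw-e_1}\binom{e_2-1}{k}(-1)^{e_2-1-k}$. *)

theory Defs
  imports "HOL-Computational_Algebra.Primes"
begin

end

theory Submission
  imports Defs
begin

lemma choose_step: "(n choose Suc k) * Suc k = (n choose k) * (n - k)"
proof (cases "Suc k \<le> n")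
  case True
  have "(n choose Suc k) * (Suc k choose k) = (n choose k) * ((n - k) choose (Suc k - k))"
    using choose_mult[of k "Suc k" n] True by simp
  then show ?thesis by simp
next
  case False
  then have "n - k = 0" by simp
  with False show ?thesis by simp
qed

lemma not_dvd_choose:
  fixes p n s :: nat
  assumes "prime p" "n mod p = s" "s < p"
  shows "t \<le> s \<Longrightarrow> \<not> p dvd (n choose t)"
proof (induction t)
  case 0
  then show ?case using assms(1) by (metis binomial_n_0 not_prime_1 nat_dvd_1_iff_1)
next
  case (Suc t)
  have IH: "\<not> p dvd (n choose t)" using Suc by simp
  have ns: "n \<ge> s" using assms(2) by (metis mod_less_eq_dividend)
  have "(n - t) mod p = s - t"
  proof -
    have "n = p * (n div p) + s" using assms(2) div_mult_mod_eq[of n p] by (simp add: mult.commute)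
    then have "n - t = p * (n div p) + (s - t)" using Suc.prems by simp
    then show ?thesis using assms(3) by simp
  qed
  then have nd: "\<not> p dvd (n - t)" using Suc.prems assms(3)
    by (metis Suc_le_eq diff_is_0_eq dvd_eq_mod_eq_0 not_less_eq_eq)
  have "\<not> p dvd ((n choose t) * (n - t))"
    using IH nd assms(1) prime_dvd_mult_iff by blast
  then have "\<not> p dvd ((n choose Suc t) * Suc t)" using choose_step by metis
  then show ?case by (meson dvd_mult2)
qed

lemma alt_sum:
  fixes c :: nat
  shows "(\<Sum>k = 0..t. (-1::int) ^ k * int (Suc c choose k)) = (-1) ^ t * int (c choose t)"
proof (induction t)
  case 0
  then show ?case by simp
next
  case (Suc t)
  have "(\<Sum>k = 0..Suc t. (-1::int) ^ k * int (Suc c choose k))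
        = (-1) ^ t * int (c choose t) + (-1) ^ Suc t * int (Suc c choose Suc t)"
    using Suc by simp
  also have "\<dots> = (-1) ^ Suc t * int (c choose Suc t)"
    by (simp add: algebra_simps)
  finally show ?case .
qed

theorem lemma5p4:
  fixes p e1 e2 e w :: nat
  assumes "prime p"
    and "e1 \<ge> e2" and "e2 \<ge> 1"
    and "e = e1 + e2"
    and "\<not> p dvd ((e - 1) * (e1 - 1) * (e2 - 1))"
    and "p * w = (LEAST m. p dvd m \<and> m \<ge> e1)"
    and "(e - 1) div p > (e1 - 1) div p + (e2 - 1) div p"
  shows "\<not> p dvd ((e2 - 1) choose (p * w - e1)) \<and>
         \<not> p dvd ((e2 - 1) choose (p * w - e1 + 1)) \<and>
         \<not> (int p) dvd (\<Sum>k = 0..p * w - e1. int ((e2 - 1) choose k) * (-1) ^ (e2 - 1 - k))"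
proof -
  have p0: "p > 0" using assms(1) prime_gt_0_nat by blast
  define A where "A = (e1 - 1) div p"
  define r where "r = (e1 - 1) mod p"
  define B where "B = (e2 - 1) div p"
  define s where "s = (e2 - 1) mod p"
  have rp: "r < p" "s < p" using p0 r_def s_def by auto
  have a_eq: "e1 - 1 = p * A + r" and b_eq: "e2 - 1 = p * B + s"
    by (simp_all add: A_def r_def B_def s_def)
  have nd1: "\<not> p dvd (e1 - 1)" and nd2: "\<not> p dvd (e2 - 1)" and nd0: "\<not> p dvd (e - 1)"
    using assms(5) by auto
  have r1: "r \<ge> 1" using nd1 r_def by (metis dvd_eq_mod_eq_0 less_one not_less)
  have s1: "s \<ge> 1" using nd2 s_def by (metis dvd_eq_mod_eq_0 less_one not_less)
  have e_eq: "e - 1 = p * (A + B) + (r + s + 1)"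
  proof -
    have "e - 1 = (e1 - 1) + (e2 - 1) + 1" using assms(2,3,4) by arith
    then show ?thesis using a_eq b_eq by (simp add: algebra_simps)
  qed
  have "(e - 1) div p = A + B + (r + s + 1) div p"
    using e_eq p0 div_mult_self2[of p "r + s + 1" "A + B"] by (simp add: add.commute mult.commute)
  with assms(7) have "(r + s + 1) div p \<ge> 1" using A_def B_def by simp
  then have ge: "r + s + 1 \<ge> p" using p0
    by (metis div_less not_less not_one_le_zero)
  have "r + s + 1 \<noteq> p"
  proof
    assume "r + s + 1 = p"
    then have "p dvd (e - 1)" using e_eq by simp
    with nd0 show False by simp
  qed
  with ge have rs: "r + s \<ge> p" by simp
  have e1eq: "e1 = p * A + r + 1" using a_eq assms(2,3) by simp
  have least: "(LEAST m. p dvd m \<and> m \<ge> e1) = p * (A + 1)"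
  proof (rule Least_equality)
    show "p dvd p * (A + 1) \<and> p * (A + 1) \<ge> e1" using e1eq rp by simp
  next
    fix m assume "p dvd m \<and> m \<ge> e1"
    then obtain q where q: "m = p * q" "p * q \<ge> e1" by auto
    then have "p * q > p * A" using e1eq by linarith
    then have "q > A" using mult_less_cancel1 by blast
    then have "A + 1 \<le> q" by simp
    then have "p * (A + 1) \<le> p * q" by (rule mult_le_mono2)
    then show "p * (A + 1) \<le> m" using q by simp
  qed
  have pw: "p * w = p * (A + 1)" using assms(6) least by simp
  define t where "t = p - r - 1"
  have t_eq: "p * w - e1 = t" using pw e1eq t_def rp by (simp add: algebra_simps)
  have t1: "t + 1 \<le> s" using t_def rs r1 rp by simp
  have c1: "\<not> p dvd ((e2 - 1) choose t)"
    using not_dvd_choose[OF assms(1) s_def[symmetric] rp(2)] t1 by simp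
  have c2: "\<not> p dvd ((e2 - 1) choose (t + 1))"
    using not_dvd_choose[OF assms(1) s_def[symmetric] rp(2)] t1 by simp
  obtain c where c: "e2 - 1 = Suc c" using s1 b_eq by (metis Suc_pred add_gr_0 less_le_trans zero_less_one)
  have cmod: "c mod p = s - 1"
  proof -
    have "c = p * B + (s - 1)" using c b_eq s1 by simp
    then show ?thesis using rp by simp
  qed
  have c3: "\<not> p dvd (c choose t)"
    using not_dvd_choose[OF assms(1) cmod] rp t1 by simp
  have "(\<Sum>k = 0..t. int ((e2 - 1) choose k) * (-1) ^ (e2 - 1 - k))
      = (\<Sum>k = 0..t. (-1) ^ (e2 - 1) * ((-1::int) ^ k * int (Suc c choose k)))"
  proof (rule sum.cong)
    fix k assume "k \<in> {0..t}"
    then have kle: "k \<le> e2 - 1" using t1 b_eq by simp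
    have "(-1::int) ^ (e2 - 1 - k) = (-1) ^ (e2 - 1) * (-1) ^ k"
    proof -
      have "(-1::int) ^ (e2 - 1) = (-1) ^ (e2 - 1 - k) * (-1) ^ k"
        using kle by (metis le_add_diff_inverse2 power_add)
      then have "(-1::int) ^ (e2 - 1) * (-1) ^ k = (-1) ^ (e2 - 1 - k) * ((-1) ^ k * (-1) ^ k)"
        by simp
      also have "\<dots> = (-1) ^ (e2 - 1 - k)" by (simp flip: power_add)
      finally show ?thesis by simp
    qed
    then show "int ((e2 - 1) choose k) * (-1) ^ (e2 - 1 - k)
      = (-1) ^ (e2 - 1) * ((-1::int) ^ k * int (Suc c choose k))"
      by (simp only: c mult_ac)
  qed simp
  also have "\<dots> = (-1) ^ (e2 - 1) * ((-1) ^ t * int (c choose t))"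
    by (simp add: alt_sum flip: sum_distrib_left)
  finally have Z: "(\<Sum>k = 0..t. int ((e2 - 1) choose k) * (-1) ^ (e2 - 1 - k))
      = (-1) ^ (e2 - 1) * ((-1) ^ t * int (c choose t))" .
  have "\<not> int p dvd (-1) ^ (e2 - 1) * ((-1) ^ t * int (c choose t))"
  proof
    assume "int p dvd (-1) ^ (e2 - 1) * ((-1) ^ t * int (c choose t))"
    moreover have "\<bar>(-1::int) ^ (e2 - 1) * ((-1) ^ t * int (c choose t))\<bar> = \<bar>int (c choose t)\<bar>"
      by (simp add: abs_mult power_abs)
    ultimately have "int p dvd int (c choose t)"
      by (metis dvd_abs_iff)
    then show False using c3 by simp
  qed
  then show ?thesis using c1 c2 t_eq Z by simp
qed

end
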